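(* Let $R$ be a commutative ring with $1$, let $A$ and $B$ be $R$-algebras, let $C,J$ be two-sided ideals of $A$, let $I$ be a two-sided ideal of $C$ (viewed as a possibly non-unital ring) and $K$ a two-sided ideal of $B$, and let $f:C\to B$ and $g:B\to C+J$ be $R$-linear maps. Assume: (1) $(C\cap J)C\subseteq I$, $C(C\cap J)\subseteq I$ and $I\subseteq C\cap J$; (2) $g(K)\subseteq J$; (3) $f(I)\subseteq K$; (4) $f$ is surjective; (5) $g$ sends idempotents to idempotents; (6) the $R$-linear maps $\overline f:C/I\to B/K$ and $\overline g:B/K\to(C+J)/J$ induced by $f$ and $g$ are multiplicative, i.e. $\overline f(xy)=\overline f(x)\overline f(y)$ and $\overline g(vw)=\overline g(v)\overline g(w)$ for all $x,y\in C/I$, $v,w\in B/K$; (7) the natural isomorphism $s:C/(C\cap J)\to(C+J)/J$ and the natural projection $q:C/I\to C/(C\cap J)$ satisfy $sq=\overline g\,\overline f$; (8) every idempotent of $A$ has a decomposition as a finite sum of pairwise orthogonal local idempotents, unique up to conjugation. Let $b\in B$ be a local idempotent with $b\notin K$. Then $g(b)\in C+J\subseteq A$ and, by (5) and (8), there are a unique $n\in\mathbb N$ and a set $\{a_0,\dots,a_n\}\subseteq A$ of pairwise orthogonal local idempotents, unique up to conjugation, with $g(b)=\sum_{i=0}^na_i$. There is exactly one $j\in\{0,\dots,n\}$ with $a_j\in C\setminus(C\cap J)$, and $a:=a_j$ satisfies $g(b)\equiv a\pmod J$ and $f(a)\equiv b\pmod K$.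
   Context: An idempotent $e$ of a ring $D$ is local if $eDe$ is a local ring. Idempotents $e,e'$ are orthogonal if $ee'=e'e=0$. *)

theory Defs
  imports Main "HOL-Combinatorics.Permutations"
begin

definition is_algebra :: "('r::comm_ring_1 \<Rightarrow> 'a::ring_1 \<Rightarrow> 'a) \<Rightarrow> bool" where
  "is_algebra sm \<longleftrightarrow>
     (\<forall>r s x. sm (r + s) x = sm r x + sm s x) \<and>
     (\<forall>r x y. sm r (x + y) = sm r x + sm r y) \<and>
     (\<forall>r s x. sm (r * s) x = sm r (sm s x)) \<and>
     (\<forall>x. sm 1 x = x) \<and>
     (\<forall>r x y. sm r (x * y) = sm r x * y) \<and>
     (\<forall>r x y. sm r (x * y) = x * sm r y)"

definition linear_on ::
  "('r \<Rightarrow> 'a \<Rightarrow> 'a) \<Rightarrow> ('r \<Rightarrow> 'b \<Rightarrow> 'b) \<Rightarrow> 'a::ab_group_add set \<Rightarrow> ('a \<Rightarrow> 'b::ab_group_add) \<Rightarrow> bool" where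
  "linear_on smA smB S h \<longleftrightarrow>
     (\<forall>x\<in>S. \<forall>y\<in>S. h (x + y) = h x + h y) \<and>
     (\<forall>r. \<forall>x\<in>S. h (smA r x) = smB r (h x))"

definition two_sided_ideal :: "'a::ring_1 set \<Rightarrow> bool" where
  "two_sided_ideal I \<longleftrightarrow> 0 \<in> I \<and>
     (\<forall>x\<in>I. \<forall>y\<in>I. x + y \<in> I) \<and> (\<forall>x\<in>I. - x \<in> I) \<and>
     (\<forall>a. \<forall>x\<in>I. a * x \<in> I \<and> x * a \<in> I)"

text \<open>Two-sided ideal I of the (possibly non-unital) R-subalgebra C; it is
  also required to be an R-submodule, so that C/I is an R-module.\<close>
definition ideal_of_sub :: "('r \<Rightarrow> 'a \<Rightarrow> 'a) \<Rightarrow> 'a::ring_1 set \<Rightarrow> 'a set \<Rightarrow> bool" where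
  "ideal_of_sub sm C I \<longleftrightarrow> I \<subseteq> C \<and> 0 \<in> I \<and>
     (\<forall>x\<in>I. \<forall>y\<in>I. x + y \<in> I) \<and> (\<forall>x\<in>I. - x \<in> I) \<and>
     (\<forall>c\<in>C. \<forall>x\<in>I. c * x \<in> I \<and> x * c \<in> I) \<and>
     (\<forall>r. \<forall>x\<in>I. sm r x \<in> I)"

definition set_plus_ring :: "'a::ring_1 set \<Rightarrow> 'a set \<Rightarrow> 'a set" where
  "set_plus_ring C J = {c + j | c j. c \<in> C \<and> j \<in> J}"

definition idem :: "'a::ring_1 \<Rightarrow> bool" where
  "idem e \<longleftrightarrow> e * e = e"

text \<open>Units of the corner ring eDe (with identity e).\<close>
definition corner_unit :: "'a::ring_1 \<Rightarrow> 'a \<Rightarrow> bool" where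
  "corner_unit e x \<longleftrightarrow> (\<exists>y. y = e * y * e \<and> x * y = e \<and> y * x = e)"

text \<open>e is a local idempotent: eDe is a local ring, i.e. e \<noteq> 0 and the
  non-units of eDe are closed under addition.\<close>
definition local_idem :: "'a::ring_1 \<Rightarrow> bool" where
  "local_idem e \<longleftrightarrow> e * e = e \<and> e \<noteq> 0 \<and>
     (\<forall>x y. x = e * x * e \<longrightarrow> y = e * y * e \<longrightarrow>
        \<not> corner_unit e x \<longrightarrow> \<not> corner_unit e y \<longrightarrow> \<not> corner_unit e (x + y))"

definition local_decomp :: "'a::ring_1 \<Rightarrow> 'a list \<Rightarrow> bool" where
  "local_decomp e as \<longleftrightarrow>
     (\<forall>i<length as. local_idem (as ! i)) \<and>
     (\<forall>i<length as. \<forall>j<length as. i \<noteq> j \<longrightarrow> as ! i * as ! j = 0) \<and>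
     sum_list as = e"

definition krull_schmidt_idems :: "'a::ring_1 itself \<Rightarrow> bool" where
  "krull_schmidt_idems _ \<longleftrightarrow> (\<forall>e::'a. idem e \<longrightarrow>
     (\<exists>as. local_decomp e as) \<and>
     (\<forall>as bs. local_decomp e as \<longrightarrow> local_decomp e bs \<longrightarrow>
        length as = length bs \<and>
        (\<exists>u v \<sigma>. u * v = 1 \<and> v * u = 1 \<and> \<sigma> permutes {..<length as} \<and>
           (\<forall>i<length as. bs ! (\<sigma> i) = u * as ! i * v))))"

end

theory Submission
  imports Defs
begin


lemma tsi_add: "two_sided_ideal J \<Longrightarrow> x \<in> J \<Longrightarrow> y \<in> J \<Longrightarrow> x + y \<in> J"
  unfolding two_sided_ideal_def by blast
lemma tsi_neg: "two_sided_ideal J \<Longrightarrow> x \<in> J \<Longrightarrow> - x \<in> J"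
  unfolding two_sided_ideal_def by blast
lemma tsi_diff: "two_sided_ideal J \<Longrightarrow> x \<in> J \<Longrightarrow> y \<in> J \<Longrightarrow> x - y \<in> J"
  using tsi_add[of J x "- y"] tsi_neg[of J y] by simp
lemma tsi_L: "two_sided_ideal J \<Longrightarrow> x \<in> J \<Longrightarrow> a * x \<in> J"
  unfolding two_sided_ideal_def by blast
lemma tsi_R: "two_sided_ideal J \<Longrightarrow> x \<in> J \<Longrightarrow> x * a \<in> J"
  unfolding two_sided_ideal_def by blast
lemma tsi_zero: "two_sided_ideal J \<Longrightarrow> 0 \<in> J"
  unfolding two_sided_ideal_def by blast

lemma sum_list_mem: "two_sided_ideal J \<Longrightarrow> (\<forall>x\<in>set xs. x \<in> J) \<Longrightarrow> sum_list xs \<in> J"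
  by (induction xs) (auto intro: tsi_add tsi_zero)

lemma orth_sum:
  fixes as :: "'a::ring_1 list"
  assumes "local_decomp e as" "i < length as"
  shows "as ! i * e = as ! i" "e * as ! i = as ! i"
proof -
  have e: "e = (\<Sum>k\<in>{0..<length as}. as ! k)"
    using assms(1) unfolding local_decomp_def by (simp add: sum_list_sum_nth)
  have idm: "as ! i * as ! i = as ! i"
    using assms unfolding local_decomp_def local_idem_def by blast
  have orth: "\<And>k. k < length as \<Longrightarrow> k \<noteq> i \<Longrightarrow> as ! i * as ! k = 0 \<and> as ! k * as ! i = 0"
    using assms unfolding local_decomp_def by blast
  have fin: "finite {0..<length as}" and mem: "i \<in> {0..<length as}" using assms(2) by auto
  have "as ! i * e = (\<Sum>k\<in>{0..<length as}. as ! i * as ! k)"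
    by (simp add: e sum_distrib_left)
  also have "\<dots> = as ! i * as ! i + (\<Sum>k\<in>{0..<length as} - {i}. as ! i * as ! k)"
    using sum.remove[OF fin mem] by simp
  also have "(\<Sum>k\<in>{0..<length as} - {i}. as ! i * as ! k) = 0"
    using orth by (intro sum.neutral) auto
  finally show "as ! i * e = as ! i" using idm by simp
  have "e * as ! i = (\<Sum>k\<in>{0..<length as}. as ! k * as ! i)"
    by (simp add: e sum_distrib_right)
  also have "\<dots> = as ! i * as ! i + (\<Sum>k\<in>{0..<length as} - {i}. as ! k * as ! i)"
    using sum.remove[OF fin mem] by simp
  also have "(\<Sum>k\<in>{0..<length as} - {i}. as ! k * as ! i) = 0"
    using orth by (intro sum.neutral) auto
  finally show "e * as ! i = as ! i" using idm by simp
qed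

lemma in_C:
  fixes a :: "'a::ring_1"
  assumes C: "two_sided_ideal C" and J: "two_sided_ideal J"
    and la: "local_idem a" and ae: "a * e = a" and e: "e = c + j" "c \<in> C" "j \<in> J"
    and nJ: "a \<notin> J"
  shows "a \<in> C"
proof (rule ccontr)
  assume nC: "a \<notin> C"
  have aa: "a * a = a" using la unfolding local_idem_def by blast
  define X where "X = a * c * a"
  define Y where "Y = a * j * a"
  have XY: "X + Y = a"
  proof -
    have "X + Y = a * e * a" unfolding X_def Y_def e by (simp add: algebra_simps)
    thus ?thesis using ae aa by simp
  qed
  have Xc: "X = a * X * a" unfolding X_def using aa by (metis mult.assoc)
  have Yc: "Y = a * Y * a" unfolding Y_def using aa by (metis mult.assoc)
  have "\<not> corner_unit a X"
  proof
    assume "corner_unit a X"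
    then obtain y where "X * y = a" unfolding corner_unit_def by blast
    moreover have "X \<in> C" unfolding X_def using e(2) C by (meson tsi_L tsi_R)
    ultimately show False using nC C tsi_R by metis
  qed
  moreover have "\<not> corner_unit a Y"
  proof
    assume "corner_unit a Y"
    then obtain y where "Y * y = a" unfolding corner_unit_def by blast
    moreover have "Y \<in> J" unfolding Y_def using e(3) J by (meson tsi_L tsi_R)
    ultimately show False using nJ J tsi_R by metis
  qed
  moreover have "corner_unit a a" unfolding corner_unit_def using aa by (metis mult.assoc)
  ultimately show False using la Xc Yc XY unfolding local_idem_def by metis
qed

lemma key:
  fixes g :: "'b::ring_1 \<Rightarrow> 'a::ring_1"
  assumes J: "two_sided_ideal J"
    and gadd: "\<forall>x y. g (x + y) = g x + g y"
    and h6g: "\<forall>v w. g (v * w) - g v * g w \<in> J"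
    and lb: "local_idem b" and ee: "g b * g b = g b"
    and aa: "a * a = a" and ae: "a * g b = a" and ea: "g b * a = a"
    and xc: "x = b * x * b" and gx: "g x - a \<in> J"
  shows "g b - a \<in> J \<or> a \<in> J"
proof -
  define e where "e = g b"
  have gdiff: "\<And>u v. g (u - v) = g u - g v"
    using gadd by (metis add_diff_cancel eq_diff_eq)
  have bb: "b * b = b" using lb unfolding local_idem_def by blast
  have bxc: "b - x = b * (b - x) * b" using bb xc by (simp add: algebra_simps)
  have bu: "corner_unit b b" unfolding corner_unit_def using bb by (metis mult.assoc)
  have "corner_unit b x \<or> corner_unit b (b - x)"
    using lb xc bxc bu unfolding local_idem_def by (metis add_diff_cancel_left'  diff_add_cancel)
  thus ?thesis
  proof
    assume "corner_unit b x"
    then obtain y where xy: "x * y = b" unfolding corner_unit_def by blast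
    have 1: "e - g x * g y \<in> J" using h6g xy unfolding e_def by metis
    have 2: "g x * g y - a * g y \<in> J"
      using tsi_R[OF J gx, of "g y"] by (simp add: algebra_simps)
    have 3: "e - a * g y \<in> J" using tsi_add[OF J 1 2] by simp
    have 4: "(e - a) * (e - a * g y) \<in> J" using tsi_L[OF J 3] .
    have "(e - a) * (e - a * g y) = e * e - a * e - (e * a) * g y + (a * a) * g y"
      by (simp add: algebra_simps)
    also have "\<dots> = e - a" using ee ae ea aa unfolding e_def by simp
    finally show ?thesis using 4 unfolding e_def by simp
  next
    assume "corner_unit b (b - x)"
    then obtain y where xy: "(b - x) * y = b" unfolding corner_unit_def by blast
    have 1: "e - (e - g x) * g y \<in> J" using h6g xy gdiff unfolding e_def by metis
    have 2: "(e - g x) * g y - (e - a) * g y \<in> J"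
      using tsi_R[OF J tsi_neg[OF J gx], of "g y"] by (simp add: algebra_simps)
    have 3: "e - (e - a) * g y \<in> J" using tsi_add[OF J 1 2] by simp
    have 4: "a * (e - (e - a) * g y) \<in> J" using tsi_L[OF J 3] .
    have "a * (e - (e - a) * g y) = a * e - (a * e - a * a) * g y"
      by (simp add: algebra_simps)
    also have "\<dots> = a" using ae aa unfolding e_def by simp
    finally show ?thesis using 4 by simp
  qed
qed

theorem proposition4p7:
  fixes smA :: "'r::comm_ring_1 \<Rightarrow> 'a::ring_1 \<Rightarrow> 'a"
    and smB :: "'r \<Rightarrow> 'b::ring_1 \<Rightarrow> 'b"
    and C J I :: "'a set" and K :: "'b set"
    and f :: "'a \<Rightarrow> 'b" and g :: "'b \<Rightarrow> 'a"
    and b :: 'b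
  assumes algA: "is_algebra smA" and algB: "is_algebra smB"
    and C_ideal: "two_sided_ideal C" and J_ideal: "two_sided_ideal J"
    and I_ideal: "ideal_of_sub smA C I" and K_ideal: "two_sided_ideal K"
    and f_lin: "linear_on smA smB C f"
    and g_lin: "linear_on smB smA UNIV g"
    and g_range: "\<forall>v. g v \<in> set_plus_ring C J"
    and h1a: "\<forall>x\<in>C \<inter> J. \<forall>c\<in>C. x * c \<in> I"
    and h1b: "\<forall>c\<in>C. \<forall>x\<in>C \<inter> J. c * x \<in> I"
    and h1c: "I \<subseteq> C \<inter> J"
    and h2: "\<forall>k\<in>K. g k \<in> J"
    and h3: "\<forall>x\<in>I. f x \<in> K"
    and h4: "f ` C = UNIV"
    and h5: "\<forall>e. idem e \<longrightarrow> idem (g e)"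
    and h6f: "\<forall>x\<in>C. \<forall>y\<in>C. f (x * y) - f x * f y \<in> K"
    and h6g: "\<forall>v w. g (v * w) - g v * g w \<in> J"
    and h7: "\<forall>c\<in>C. g (f c) - c \<in> J"
    and h8: "krull_schmidt_idems TYPE('a)"
    and b_local: "local_idem b" and b_notK: "b \<notin> K"
  shows "g b \<in> set_plus_ring C J \<and>
         (\<exists>as. local_decomp (g b) as) \<and>
         (\<forall>as. local_decomp (g b) as \<longrightarrow>
            (\<exists>j<length as. as ! j \<in> C \<and> as ! j \<notin> C \<inter> J \<and>
               (\<forall>k<length as. as ! k \<in> C \<and> as ! k \<notin> C \<inter> J \<longrightarrow> k = j) \<and>
               g b - as ! j \<in> J \<and> f (as ! j) - b \<in> K))"
proof -
  have gadd: "\<forall>x y. g (x + y) = g x + g y" using g_lin unfolding linear_on_def by blast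
  have gdiff: "\<And>u v. g (u - v) = g u - g v"
    using gadd by (metis add_diff_cancel eq_diff_eq)
  have bb: "b * b = b" using b_local unfolding local_idem_def by blast
  have ee: "g b * g b = g b" using h5 bb unfolding idem_def by blast
  obtain c0 where c0: "c0 \<in> C" "f c0 = 1" using h4 by (metis UNIV_I imageE)
  have L1: "\<And>v. g v \<in> J \<Longrightarrow> v \<in> K"
  proof -
    fix v assume gv: "g v \<in> J"
    obtain x where x: "x \<in> C" "v = f x" using h4 by (metis UNIV_I imageE)
    have "g (f x) - x \<in> J" using h7 x by blast
    hence "g (f x) - (g (f x) - x) \<in> J" using gv x tsi_diff[OF J_ideal] by blast
    hence "x \<in> J" by simp
    hence "x * c0 \<in> I" using h1a x c0 by blast
    hence "f (x * c0) \<in> K" using h3 by blast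
    moreover have "f (x * c0) - f x * f c0 \<in> K" using h6f x c0 by blast
    ultimately have "f (x * c0) - (f (x * c0) - f x * f c0) \<in> K" using tsi_diff[OF K_ideal] by blast
    hence "f x * f c0 \<in> K" by simp
    thus "v \<in> K" using x c0 by simp
  qed
  have ex: "\<exists>as. local_decomp (g b) as"
    using h8 ee unfolding krull_schmidt_idems_def idem_def by blast
  obtain c j where cj: "g b = c + j" "c \<in> C" "j \<in> J"
    using g_range unfolding set_plus_ring_def by blast
  have main: "\<exists>j<length as. as ! j \<in> C \<and> as ! j \<notin> C \<inter> J \<and>
               (\<forall>k<length as. as ! k \<in> C \<and> as ! k \<notin> C \<inter> J \<longrightarrow> k = j) \<and>
               g b - as ! j \<in> J \<and> f (as ! j) - b \<in> K" if ld: "local_decomp (g b) as" for as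
  proof -
    have "\<exists>i<length as. as ! i \<notin> J"
    proof (rule ccontr)
      assume "\<not> ?thesis"
      hence "\<forall>x\<in>set as. x \<in> J" by (metis in_set_conv_nth)
      hence "g b \<in> J" using sum_list_mem[OF J_ideal] ld unfolding local_decomp_def by metis
      thus False using L1 b_notK by blast
    qed
    then obtain i where i: "i < length as" "as ! i \<notin> J" by blast
    define a where "a = as ! i"
    have la: "local_idem a" using ld i unfolding local_decomp_def a_def by blast
    have aa: "a * a = a" using la unfolding local_idem_def by blast
    have ae: "a * g b = a" and ea: "g b * a = a" using orth_sum[OF ld i(1)] a_def by auto
    have aC: "a \<in> C" using in_C[OF C_ideal J_ideal la ae cj] i a_def by blast
    define x where "x = b * f a * b"
    have xc: "x = b * x * b" unfolding x_def using bb by (metis mult.assoc)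
    have gx: "g x - a \<in> J"
    proof -
      have 1: "g x - g (b * f a) * g b \<in> J" using h6g unfolding x_def by blast
      have 2: "g (b * f a) - g b * g (f a) \<in> J" using h6g by blast
      have 3: "g (f a) - a \<in> J" using h7 aC by blast
      have 4: "g (b * f a) * g b - g b * g (f a) * g b \<in> J"
        using tsi_R[OF J_ideal 2, of "g b"] by (simp add: algebra_simps)
      have 5: "g b * g (f a) * g b - g b * a * g b \<in> J"
        using tsi_R[OF J_ideal tsi_L[OF J_ideal 3, of "g b"], of "g b"] by (simp add: algebra_simps)
      have "g x - g b * a * g b \<in> J"
        using tsi_add[OF J_ideal tsi_add[OF J_ideal 1 4] 5] by simp
      thus ?thesis using ae ea by simp
    qed
    have eJ: "g b - a \<in> J"
      using key[OF J_ideal gadd h6g b_local ee aa ae ea xc gx] i a_def by blast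
    have uniq: "k = i" if k: "k < length as" "as ! k \<in> C" "as ! k \<notin> C \<inter> J" for k
    proof (rule ccontr)
      assume ki: "k \<noteq> i"
      have "as ! k * a = 0" using ld k ki i unfolding local_decomp_def a_def by blast
      moreover have "as ! k * g b = as ! k" using orth_sum[OF ld k(1)] by auto
      ultimately have "as ! k * (g b - a) = as ! k" by (simp add: algebra_simps)
      hence "as ! k \<in> J" using tsi_L[OF J_ideal eJ] by metis
      thus False using k by blast
    qed
    have fK: "f a - b \<in> K"
    proof (rule L1)
      have "g (f a) - g b \<in> J"
        using tsi_diff[OF J_ideal h7[rule_format, OF aC] eJ] by simp
      thus "g (f a - b) \<in> J" using gdiff by simp
    qed
    show ?thesis using i aC eJ fK uniq a_def by blast
  qed
  show ?thesis using g_range ex main by blast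
qed

end
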